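(* Let $G=(V,E)$ be a finite connected undirected graph with probability weights $w:E\to\mathbb{R}_{>0}$ and edge values $\omega:E\to\mathbb{R}$, let $r\in V$ be arbitrary, and let $T$ be a random spanning tree of $G$ with $\Pr(T)\propto\prod_{e\in E_T}w(e)$. Define $R(T)=\sum_{e\in E_T}\omega(e)$. Then $$\mathbb{E}[R(T)]=\operatorname{Tr}\Big[L_{G\times\omega}^{[r]}\big(L_G^{[r]}\big)^{-1}\Big],$$ $$\operatorname{Var}[R(T)]=\operatorname{Tr}\Big[\Big(L_{G\times\omega^2}^{[r]}-L_{G\times\omega}^{[r]}\big(L_G^{[r]}\big)^{-1}L_{G\times\omega}^{[r]}\Big)\big(L_G^{[r]}\big)^{-1}\Big].$$
   Context: For an edge weight function $c:E\to\mathbb{R}$, its Laplacian is $L=D-A$ with $A_{ij}=c(\{i,j\})$ (zero if $\{i,j\}\notin E$) and $D$ diagonal with $D_{ii}=\sum_jA_{ij}$. $L_G$, $L_{G\times\omega}$, $L_{G\times\omega^2}$ are the Laplacians for the edge weights $w(e)$, $w(e)\omega(e)$ and $w(e)\omega(e)^2$ respectively. For a matrix $M$ indexed by $V$, $M^{[r]}$ denotes $M$ with the row and column indexed by $r$ removed; $\operatorname{Tr}$ is the trace. *)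

theory Defs
  imports Complex_Main
begin

definition simple_graph :: "'a set \<Rightarrow> 'a set set \<Rightarrow> bool" where
  "simple_graph V E \<longleftrightarrow> finite V \<and>
     (\<forall>e\<in>E. \<exists>u v. u \<in> V \<and> v \<in> V \<and> u \<noteq> v \<and> e = {u, v})"

definition adj :: "'a set set \<Rightarrow> 'a \<Rightarrow> 'a \<Rightarrow> bool" where
  "adj F u v \<longleftrightarrow> u \<noteq> v \<and> {u, v} \<in> F"

definition reach :: "'a set set \<Rightarrow> 'a \<Rightarrow> 'a \<Rightarrow> bool" where
  "reach F = (adj F)\<^sup>*\<^sup>*"

definition connected_graph :: "'a set \<Rightarrow> 'a set set \<Rightarrow> bool" where
  "connected_graph V F \<longleftrightarrow> (\<forall>u\<in>V. \<forall>v\<in>V. reach F u v)"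

text \<open>Acyclic: no edge lies on a cycle, i.e. removing any edge disconnects its endpoints.\<close>
definition acyclic_graph :: "'a set set \<Rightarrow> bool" where
  "acyclic_graph F \<longleftrightarrow> (\<forall>e\<in>F. \<forall>u v. u \<noteq> v \<and> e = {u, v} \<longrightarrow> \<not> reach (F - {e}) u v)"

definition spanning_trees :: "'a set \<Rightarrow> 'a set set \<Rightarrow> 'a set set set" where
  "spanning_trees V E = {F. F \<subseteq> E \<and> connected_graph V F \<and> acyclic_graph F}"

definition tree_weight :: "('a set \<Rightarrow> real) \<Rightarrow> 'a set set \<Rightarrow> real" where
  "tree_weight w T = (\<Prod>e\<in>T. w e)"

definition R_val :: "('a set \<Rightarrow> real) \<Rightarrow> 'a set set \<Rightarrow> real" where
  "R_val \<omega> T = (\<Sum>e\<in>T. \<omega> e)"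

definition tree_expect :: "'a set \<Rightarrow> 'a set set \<Rightarrow> ('a set \<Rightarrow> real) \<Rightarrow> ('a set set \<Rightarrow> real) \<Rightarrow> real" where
  "tree_expect V E w f =
     (\<Sum>T\<in>spanning_trees V E. tree_weight w T * f T) / (\<Sum>T\<in>spanning_trees V E. tree_weight w T)"

definition tree_var :: "'a set \<Rightarrow> 'a set set \<Rightarrow> ('a set \<Rightarrow> real) \<Rightarrow> ('a set set \<Rightarrow> real) \<Rightarrow> real" where
  "tree_var V E w f = tree_expect V E w (\<lambda>T. (f T - tree_expect V E w f)\<^sup>2)"

definition mmult :: "'a set \<Rightarrow> ('a \<Rightarrow> 'a \<Rightarrow> real) \<Rightarrow> ('a \<Rightarrow> 'a \<Rightarrow> real) \<Rightarrow> ('a \<Rightarrow> 'a \<Rightarrow> real)" where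
  "mmult S A B = (\<lambda>i j. \<Sum>k\<in>S. A i k * B k j)"

definition mtrace :: "'a set \<Rightarrow> ('a \<Rightarrow> 'a \<Rightarrow> real) \<Rightarrow> real" where
  "mtrace S A = (\<Sum>i\<in>S. A i i)"

definition is_inverse_on :: "'a set \<Rightarrow> ('a \<Rightarrow> 'a \<Rightarrow> real) \<Rightarrow> ('a \<Rightarrow> 'a \<Rightarrow> real) \<Rightarrow> bool" where
  "is_inverse_on S A B \<longleftrightarrow>
     (\<forall>i\<in>S. \<forall>j\<in>S. mmult S A B i j = (if i = j then 1 else 0) \<and>
                   mmult S B A i j = (if i = j then 1 else 0))"

definition minv :: "'a set \<Rightarrow> ('a \<Rightarrow> 'a \<Rightarrow> real) \<Rightarrow> ('a \<Rightarrow> 'a \<Rightarrow> real)" where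
  "minv S A = (THE B. is_inverse_on S A B \<and> (\<forall>i j. i \<notin> S \<or> j \<notin> S \<longrightarrow> B i j = 0))"

text \<open>M^[r]: delete row and column r; as an index set this is V - {r}.\<close>
definition reduced :: "'a \<Rightarrow> ('a \<Rightarrow> 'a \<Rightarrow> real) \<Rightarrow> ('a \<Rightarrow> 'a \<Rightarrow> real)" where
  "reduced r M = (\<lambda>i j. if i = r \<or> j = r then 0 else M i j)"

definition adj_mat :: "'a set set \<Rightarrow> ('a set \<Rightarrow> real) \<Rightarrow> 'a \<Rightarrow> 'a \<Rightarrow> real" where
  "adj_mat E c i j = (if {i, j} \<in> E then c {i, j} else 0)"

definition laplacian :: "'a set \<Rightarrow> 'a set set \<Rightarrow> ('a set \<Rightarrow> real) \<Rightarrow> 'a \<Rightarrow> 'a \<Rightarrow> real" where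
  "laplacian V E c i j =
     (if i = j then (\<Sum>k\<in>V. adj_mat E c i k) else 0) - adj_mat E c i j"

end

theory Submission
  imports Defs "Jordan_Normal_Form.Determinant"
begin


lemma adj_sym: "adj F u v = adj F v u"
  unfolding adj_def by (auto simp: insert_commute)

lemma reach_sym: assumes "reach F u v" shows "reach F v u"
proof -
  have "(adj F)\<^sup>*\<^sup>* u v" using assms by (simp add: reach_def)
  then have "(adj F)\<^sup>*\<^sup>* v u"
  proof (induction rule: rtranclp_induct)
    case base then show ?case by simp
  next
    case (step y z)
    then have "adj F z y" using adj_sym by metis
    then show ?case using step(3) by (meson converse_rtranclp_into_rtranclp)
  qed
  then show ?thesis by (simp add: reach_def)
qed

lemma reach_trans: "reach F u v \<Longrightarrow> reach F v x \<Longrightarrow> reach F u x"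
  unfolding reach_def by (meson rtranclp_trans)

lemma reach_refl: "reach F u u"
  unfolding reach_def by simp

lemma reach_edge: "u \<noteq> v \<Longrightarrow> {u, v} \<in> F \<Longrightarrow> reach F u v"
  unfolding reach_def adj_def by auto

lemma reach_mono: "F \<subseteq> F' \<Longrightarrow> reach F u v \<Longrightarrow> reach F' u v"
proof -
  assume "F \<subseteq> F'"
  then have "adj F \<le> adj F'" unfolding adj_def by auto
  then show "reach F u v \<Longrightarrow> reach F' u v" unfolding reach_def
    by (metis rtranclp_mono predicate2D)
qed

lemma reach_invariant:
  assumes "reach F u v" "P u" "\<And>x y. P x \<Longrightarrow> x \<noteq> y \<Longrightarrow> {x, y} \<in> F \<Longrightarrow> P y"
  shows "P v"
proof -
  have "(adj F)\<^sup>*\<^sup>* u v" using assms(1) by (simp add: reach_def)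
  then show ?thesis
    by (induction rule: rtranclp_induct) (use assms in \<open>auto simp: adj_def\<close>)
qed

definition acyc :: "'a set \<Rightarrow> ('a \<Rightarrow> 'a) \<Rightarrow> bool" where
  "acyc S f \<longleftrightarrow> (\<forall>C. C \<subseteq> S \<and> C \<noteq> {} \<longrightarrow> \<not> f ` C \<subseteq> C)"

definition tof :: "'a set \<Rightarrow> ('a \<Rightarrow> 'a) \<Rightarrow> 'a set set" where
  "tof S f = (\<lambda>v. {v, f v}) ` S"

definition AF :: "'a set \<Rightarrow> 'a set set \<Rightarrow> 'a \<Rightarrow> ('a \<Rightarrow> 'a) set" where
  "AF V E r = {f \<in> PiE (V - {r}) (\<lambda>_. V). acyc (V - {r}) f \<and> (\<forall>v\<in>V - {r}. {v, f v} \<in> E)}"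

lemma acyc_noloop: "acyc S f \<Longrightarrow> v \<in> S \<Longrightarrow> f v \<noteq> v"
  unfolding acyc_def by (erule allE[of _ "{v}"]) auto

lemma acyc_no2: "acyc S f \<Longrightarrow> u \<in> S \<Longrightarrow> v \<in> S \<Longrightarrow> f u = v \<Longrightarrow> f v = u \<Longrightarrow> False"
  unfolding acyc_def by (erule allE[of _ "{u,v}"]) auto

lemma doubleton_eq: "u \<noteq> v \<Longrightarrow> {u, a} = {v, b} \<Longrightarrow> u = b \<and> a = v"
  by (metis doubleton_eq_iff)

lemma tof_inj: assumes "acyc S f" shows "inj_on (\<lambda>v. {v, f v}) S"
proof (rule inj_onI)
  fix u v assume uv: "u \<in> S" "v \<in> S" "{u, f u} = {v, f v}"
  show "u = v"
  proof (rule ccontr)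
    assume "u \<noteq> v"
    with uv doubleton_eq have "u = f v" "f u = v" by metis+
    then show False using acyc_no2[OF assms] uv by metis
  qed
qed

context
  fixes V :: "'a set" and E :: "'a set set" and r :: 'a
  assumes sg: "simple_graph V E" and rV: "r \<in> V"
begin

lemma finV: "finite V" using sg unfolding simple_graph_def by auto

lemma edge_in_V: "{u, v} \<in> E \<Longrightarrow> v \<in> V"
  using sg unfolding simple_graph_def by (metis doubleton_eq_iff insertI1 insert_commute)

lemma edge_ne: "{u, v} \<in> E \<Longrightarrow> u \<noteq> v"
  using sg unfolding simple_graph_def by (metis doubleton_eq_iff insert_absorb2)

lemma finE: "finite E"
proof -
  have "E \<subseteq> Pow V" using sg unfolding simple_graph_def by auto
  then show ?thesis using finV by (meson finite_Pow_iff finite_subset)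
qed

lemma AF_connected: assumes f: "f \<in> AF V E r"
  shows "connected_graph V (tof (V - {r}) f)"
proof -
  let ?S = "V - {r}" let ?T = "tof (V - {r}) f"
  have fS: "f \<in> PiE ?S (\<lambda>_. V)" and ac: "acyc ?S f" using f unfolding AF_def by auto
  define P where "P = {v \<in> V. reach ?T v r}"
  have rP: "r \<in> P" unfolding P_def using rV reach_refl by simp
  have cl: "f ` (?S - P) \<subseteq> ?S - P"
  proof
    fix y assume "y \<in> f ` (?S - P)"
    then obtain v where v: "v \<in> ?S" "v \<notin> P" "y = f v" by blast
    have fvV: "f v \<in> V" using fS v(1) by (simp add: PiE_iff)
    have ne: "v \<noteq> f v" using acyc_noloop[OF ac v(1)] by simp
    have ed: "{v, f v} \<in> ?T" using v(1) unfolding tof_def by blast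
    have "f v \<notin> P"
    proof
      assume "f v \<in> P"
      then have "reach ?T (f v) r" unfolding P_def by simp
      then have "reach ?T v r" using reach_trans[OF reach_edge[OF ne ed]] by simp
      then show False using v unfolding P_def by simp
    qed
    then have "f v \<in> ?S - P" using fvV rP by auto
    then show "y \<in> ?S - P" using v(3) by simp
  qed
  have "?S - P = {}"
  proof (rule ccontr)
    assume "?S - P \<noteq> {}"
    moreover have "?S - P \<subseteq> ?S" by simp
    ultimately have "\<not> f ` (?S - P) \<subseteq> ?S - P" using ac unfolding acyc_def by simp
    then show False using cl by simp
  qed
  then have all: "reach ?T v r" if "v \<in> V" for v
  proof (cases "v = r")
    case True then show ?thesis using reach_refl by simp
  next
    case False
    then have "v \<in> ?S" using that by simp
    then have "v \<in> P" using \<open>?S - P = {}\<close> by blast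
    then show ?thesis unfolding P_def by simp
  qed
  show ?thesis unfolding connected_graph_def
  proof (intro ballI)
    fix u v assume uv: "u \<in> V" "v \<in> V"
    have "reach ?T u r" using all[OF uv(1)] .
    moreover have "reach ?T r v" using reach_sym[OF all[OF uv(2)]] .
    ultimately show "reach ?T u v" by (rule reach_trans)
  qed
qed

inductive desc for f S x where
  desc_base: "desc f S x x"
| desc_step: "z \<in> S \<Longrightarrow> desc f S x (f z) \<Longrightarrow> desc f S x z"

lemma desc_cases': "desc f S x y \<Longrightarrow> y = x \<or> (y \<in> S \<and> desc f S x (f y))"
  by (induction rule: desc.induct) auto

lemma AF_acyclic: assumes f: "f \<in> AF V E r"
  shows "acyclic_graph (tof (V - {r}) f)"
proof -
  let ?S = "V - {r}" let ?T = "tof (V - {r}) f"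
  have ac: "acyc ?S f" using f unfolding AF_def by auto
  have key: "\<not> reach (?T - {{x, f x}}) x (f x)" if x: "x \<in> ?S" for x
  proof
    assume rch: "reach (?T - {{x, f x}}) x (f x)"
    define D where "D = {y. desc f ?S x y}"
    have Dsub: "D \<subseteq> ?S"
    proof
      fix y assume "y \<in> D"
      then have "desc f ?S x y" unfolding D_def by simp
      then have "y = x \<or> y \<in> ?S" using desc_cases'[of f ?S x y] by blast
      then show "y \<in> ?S" using x by blast
    qed
    have inv: "desc f ?S x (f x)"
    proof (rule reach_invariant[OF rch, of "desc f ?S x"])
      show "desc f ?S x x" by (rule desc_base)
    next
      fix a b assume a: "desc f ?S x a" "a \<noteq> b" "{a, b} \<in> ?T - {{x, f x}}"
      have ab: "{a, b} \<in> ?T" "{a, b} \<noteq> {x, f x}" using a(3) by auto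
      then obtain z where z1: "z \<in> ?S" "{a, b} = {z, f z}"
        unfolding tof_def by (auto elim!: imageE)
      have z: "z \<in> ?S" "{a, b} = {z, f z}" "{z, f z} \<noteq> {x, f x}" using z1 ab by auto
      show "desc f ?S x b"
      proof (cases "a = z")
        case True
        then have bz: "b = f z" using z(2) a(2) by (simp add: doubleton_eq_iff)
        have "z \<noteq> x" using z(3) by blast
        then have "a \<noteq> x" using True by simp
        then have "desc f ?S x (f a)" using desc_cases'[OF a(1)] by blast
        then show ?thesis using True bz by simp
      next
        case False
        then have "a = f z" "b = z" using z(2) by (simp_all add: doubleton_eq_iff)
        then show ?thesis using a(1) z(1) desc_step[of z ?S f x] by simp
      qed
    qed
    have "f ` D \<subseteq> D"
    proof
      fix y assume "y \<in> f ` D"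
      then obtain z where z: "desc f ?S x z" "y = f z" unfolding D_def by blast
      have "z = x \<or> desc f ?S x (f z)" using desc_cases'[OF z(1)] by blast
      then have "desc f ?S x (f z)" using inv by blast
      then show "y \<in> D" using z(2) unfolding D_def by simp
    qed
    moreover have "x \<in> D" using desc_base[of f ?S x] unfolding D_def by simp
    then have "D \<noteq> {}" by blast
    ultimately show False using ac Dsub unfolding acyc_def by blast
  qed
  show ?thesis unfolding acyclic_graph_def
  proof (intro ballI allI impI)
    fix e u v assume e: "e \<in> ?T" and uv: "u \<noteq> v \<and> e = {u, v}"
    then obtain x where x: "x \<in> ?S" "e = {x, f x}" unfolding tof_def by blast
    show "\<not> reach (?T - {e}) u v"
    proof (cases "u = x")
      case True
      then have "v = f x" using uv x by (auto simp: doubleton_eq_iff)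
      then show ?thesis using key[OF x(1)] True x(2) by simp
    next
      case False
      then have "u = f x" "v = x" using uv x by (auto simp: doubleton_eq_iff)
      then show ?thesis using key[OF x(1)] x(2) reach_sym[of "?T - {e}" u v] by auto
    qed
  qed
qed

lemma AF_tree: assumes f: "f \<in> AF V E r"
  shows "tof (V - {r}) f \<in> spanning_trees V E"
proof -
  have "\<forall>v\<in>V - {r}. {v, f v} \<in> E" using f unfolding AF_def by blast
  then have "tof (V - {r}) f \<subseteq> E" unfolding tof_def by blast
  then show ?thesis unfolding spanning_trees_def using AF_connected[OF f] AF_acyclic[OF f] by auto
qed

lemma exists_AF_sub: assumes TE: "T \<subseteq> E" and conT: "connected_graph V T"
  shows "\<exists>f\<in>AF V E r. tof (V - {r}) f \<subseteq> T"
proof -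
  let ?S = "V - {r}"
  define d where "d v = (LEAST k. (adj T ^^ k) v r)" for v
  have ex: "\<exists>k. (adj T ^^ k) v r" if "v \<in> V" for v
  proof -
    have "reach T v r" using conT that rV unfolding connected_graph_def by blast
    then show ?thesis unfolding reach_def rtranclp_power .
  qed
  have dP: "(adj T ^^ d v) v r" if "v \<in> V" for v
    unfolding d_def using LeastI_ex[OF ex[OF that]] .
  have dmin: "d v \<le> k" if "(adj T ^^ k) v r" for v k
    unfolding d_def using that by (rule Least_le)
  have adjV: "j \<in> V" if "adj T v j" for v j
  proof -
    have "{v, j} \<in> E" using that TE unfolding adj_def by blast
    then show ?thesis by (rule edge_in_V)
  qed
  have step: "\<exists>j. adj T v j \<and> d j < d v" if v: "v \<in> ?S" for v
  proof (cases "d v")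
    case 0
    then have "(adj T ^^ 0) v r" using dP[of v] v by simp
    then have "v = r" by (rule relpowp_0_E)
    then show ?thesis using v by simp
  next
    case (Suc m)
    then have "(adj T ^^ Suc m) v r" using dP[of v] v by simp
    then obtain j where j: "adj T v j" "(adj T ^^ m) j r" using relpowp_Suc_D2 by metis
    have "d j \<le> m" using dmin[OF j(2)] .
    then show ?thesis using j(1) Suc by (intro exI[of _ j]) simp
  qed
  define g where "g v = (SOME j. adj T v j \<and> d j < d v)" for v
  have gP: "adj T v (g v) \<and> d (g v) < d v" if "v \<in> ?S" for v
    unfolding g_def using someI_ex[OF step[OF that]] .
  define f where "f = restrict g ?S"
  have fv: "f v = g v" if "v \<in> ?S" for v using that unfolding f_def by simp
  have fP: "adj T v (f v) \<and> d (f v) < d v" if "v \<in> ?S" for v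
    using gP[OF that] fv[OF that] by simp
  have fPi: "f \<in> PiE ?S (\<lambda>_. V)"
    unfolding f_def restrict_PiE_iff using gP adjV by blast
  have fT: "{v, f v} \<in> T" if "v \<in> ?S" for v
    using fP[OF that] unfolding adj_def by blast
  have fac: "acyc ?S f" unfolding acyc_def
  proof (intro allI impI notI)
    fix C assume C: "C \<subseteq> ?S \<and> C \<noteq> {}" and cl: "f ` C \<subseteq> C"
    have finC: "finite C" using C finV by (meson Diff_subset finite_subset)
    define m where "m = Min (d ` C)"
    have "m \<in> d ` C" unfolding m_def using finC C by (intro Min_in) auto
    then obtain v where v: "v \<in> C" "d v = m" by blast
    have "f v \<in> C" using cl v(1) by blast
    then have "m \<le> d (f v)" unfolding m_def using finC by (intro Min_le) auto
    moreover have "d (f v) < d v" using fP v(1) C by blast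
    ultimately show False using v(2) by simp
  qed
  have "f \<in> AF V E r" unfolding AF_def using fPi fac fT TE by blast
  moreover have "tof ?S f \<subseteq> T" unfolding tof_def using fT by blast
  ultimately show ?thesis by blast
qed

lemma AF_surj: assumes T: "T \<in> spanning_trees V E"
  shows "\<exists>f\<in>AF V E r. tof (V - {r}) f = T"
proof -
  have TE: "T \<subseteq> E" and conT: "connected_graph V T" and acT: "acyclic_graph T"
    using T unfolding spanning_trees_def by auto
  obtain f where f: "f \<in> AF V E r" and sub: "tof (V - {r}) f \<subseteq> T"
    using exists_AF_sub[OF TE conT] by blast
  have "T \<subseteq> tof (V - {r}) f"
  proof
    fix e assume e: "e \<in> T"
    show "e \<in> tof (V - {r}) f"
    proof (rule ccontr)
      assume ne: "e \<notin> tof (V - {r}) f"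
      have "e \<in> E" using e TE by blast
      then obtain u v where uv: "u \<in> V" "v \<in> V" "u \<noteq> v" "e = {u, v}"
        using sg unfolding simple_graph_def by blast
      have "reach (tof (V - {r}) f) u v"
        using AF_connected[OF f] uv unfolding connected_graph_def by blast
      moreover have "tof (V - {r}) f \<subseteq> T - {e}" using sub ne by blast
      ultimately have "reach (T - {e}) u v" by (rule reach_mono[rotated])
      then show False using acT e uv unfolding acyclic_graph_def by blast
    qed
  qed
  then show ?thesis using f sub by blast
qed

lemma AF_inj: assumes f: "f \<in> AF V E r" and g: "g \<in> AF V E r"
  and eq: "tof (V - {r}) f = tof (V - {r}) g"
  shows "f = g"
proof -
  let ?S = "V - {r}"
  have fS: "f \<in> PiE ?S (\<lambda>_. V)" and acf: "acyc ?S f" using f unfolding AF_def by auto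
  have gS: "g \<in> PiE ?S (\<lambda>_. V)" and acg: "acyc ?S g" using g unfolding AF_def by auto
  define W where "W = {v \<in> ?S. f v \<noteq> g v}"
  have cl: "g ` W \<subseteq> W"
  proof
    fix y assume "y \<in> g ` W"
    then obtain v where v: "v \<in> ?S" "f v \<noteq> g v" "y = g v" unfolding W_def by blast
    have "{v, g v} \<in> tof ?S f" using eq v(1) unfolding tof_def by blast
    then obtain z where z: "z \<in> ?S" "{v, g v} = {z, f z}" unfolding tof_def by blast
    have zv: "z \<noteq> v"
    proof
      assume "z = v"
      then have "{v, g v} = {v, f v}" using z(2) by simp
      then have "g v = f v" by (auto simp: doubleton_eq_iff)
      then show False using v(2) by simp
    qed
    then have "v = f z" "g v = z" using z(2) doubleton_eq[of v z "g v" "f z"] by auto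
    then have gv: "g v \<in> ?S" "f (g v) = v" using z(1) by auto
    have "g (g v) \<noteq> v"
    proof
      assume "g (g v) = v"
      then show False using acyc_no2[OF acg v(1) gv(1)] by simp
    qed
    then have "g v \<in> W" using gv unfolding W_def by simp
    then show "y \<in> W" using v(3) by simp
  qed
  have "W = {}"
  proof (rule ccontr)
    assume "W \<noteq> {}"
    moreover have "W \<subseteq> ?S" unfolding W_def by blast
    ultimately show False using acg cl unfolding acyc_def by blast
  qed
  then have "\<And>v. v \<in> ?S \<Longrightarrow> f v = g v" unfolding W_def by blast
  then show ?thesis using PiE_ext[OF fS gS] by blast
qed

lemma AF_bij: "bij_betw (tof (V - {r})) (AF V E r) (spanning_trees V E)"
  unfolding bij_betw_def
proof
  show "inj_on (tof (V - {r})) (AF V E r)" by (rule inj_onI) (rule AF_inj)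
  show "tof (V - {r}) ` AF V E r = spanning_trees V E"
    using AF_tree AF_surj by blast
qed

lemma finite_AF: "finite (AF V E r)"
proof -
  have "AF V E r \<subseteq> PiE (V - {r}) (\<lambda>_. V)" unfolding AF_def by blast
  then show ?thesis using finV by (meson finite_PiE finite_Diff finite_subset)
qed

lemma finite_ST: "finite (spanning_trees V E)"
  using AF_bij finite_AF bij_betw_finite by blast

lemma ST_nonempty: assumes "connected_graph V E" shows "spanning_trees V E \<noteq> {}"
proof -
  obtain f where "f \<in> AF V E r" using exists_AF_sub[OF subset_refl assms] by blast
  then show ?thesis using AF_tree by blast
qed

end


definition Mf :: "nat \<Rightarrow> (nat \<Rightarrow> 'a) \<Rightarrow> ('a \<Rightarrow> 'a) \<Rightarrow> real mat" where
  "Mf n h f = mat n n (\<lambda>(i,j). (if i = j then 1 else 0) - (if f (h i) = h j then 1 else 0))"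

lemma Mf_carrier: "Mf n h f \<in> carrier_mat n n" unfolding Mf_def by simp

lemma Mf_dims[simp]: "dim_row (Mf n h f) = n" "dim_col (Mf n h f) = n" unfolding Mf_def by simp_all

lemma detMf_acyc:
  assumes hb: "bij_betw h {0..<n} S" and ac: "acyc S f"
  shows "det (Mf n h f) = 1"
proof -
  let ?M = "Mf n h f"
  let ?P = "{p. p permutes {0..<n}}"
  have hS: "h i \<in> S" if "i < n" for i using hb that unfolding bij_betw_def by auto
  have Mij: "?M $$ (i, j) = (if i = j then 1 else 0) - (if f (h i) = h j then 1 else 0)"
    if "i < n" "j < n" for i j using that unfolding Mf_def by simp
  have term0: "(\<Prod>i=0..<n. ?M $$ (i, p i)) = 0" if p: "p permutes {0..<n}" "p \<noteq> id" for p
  proof (rule ccontr)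
    assume nz: "(\<Prod>i=0..<n. ?M $$ (i, p i)) \<noteq> 0"
    have pin: "p i < n" if "i < n" for i using permutes_in_image[OF p(1)] that by simp
    have fac: "?M $$ (i, p i) \<noteq> 0" if "i < n" for i using nz that by auto
    define K where "K = {i \<in> {0..<n}. p i \<noteq> i}"
    have K1: "f (h i) = h (p i)" if "i \<in> K" for i
    proof -
      have i: "i < n" "p i \<noteq> i" using that unfolding K_def by auto
      show ?thesis using fac[OF i(1)] Mij[OF i(1) pin[OF i(1)]] i(2) by (auto split: if_splits)
    qed
    have K2: "p i \<in> K" if "i \<in> K" for i
    proof -
      have i: "i < n" "p i \<noteq> i" using that unfolding K_def by auto
      have "p (p i) \<noteq> p i"
      proof
        assume "p (p i) = p i"
        then have "p i = i" using permutes_inj[OF p(1)] by (meson injD)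
        then show False using i(2) by simp
      qed
      then show ?thesis using pin[OF i(1)] unfolding K_def by simp
    qed
    obtain i where "p i \<noteq> i" using p(2) by (metis eq_id_iff)
    then have "i \<in> {0..<n}" using permutes_not_in[OF p(1)] by blast
    then have iK: "i \<in> K" using \<open>p i \<noteq> i\<close> unfolding K_def by simp
    have "h ` K \<subseteq> S" using hS unfolding K_def by auto
    moreover have "h ` K \<noteq> {}" using iK by blast
    moreover have "f ` (h ` K) \<subseteq> h ` K"
    proof
      fix y assume "y \<in> f ` (h ` K)"
      then obtain j where j: "j \<in> K" "y = f (h j)" by blast
      then have "y = h (p j)" using K1 by simp
      then show "y \<in> h ` K" using K2[OF j(1)] by blast
    qed
    ultimately show False using ac unfolding acyc_def by blast
  qed
  have "det ?M = (\<Sum>p\<in>?P. signof p * (\<Prod>i=0..<n. ?M $$ (i, p i)))"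
    by (rule det_def'[OF Mf_carrier])
  also have "\<dots> = signof id * (\<Prod>i=0..<n. ?M $$ (i, id i)) + (\<Sum>p\<in>?P - {id}. signof p * (\<Prod>i=0..<n. ?M $$ (i, p i)))"
    by (rule sum.remove) (auto simp: permutes_id finite_permutations)
  also have "(\<Sum>p\<in>?P - {id}. signof p * (\<Prod>i=0..<n. ?M $$ (i, p i))) = 0"
    by (rule sum.neutral) (use term0 in auto)
  also have "(\<Prod>i=0..<n. ?M $$ (i, id i)) = 1"
  proof (rule prod.neutral, intro ballI)
    fix i assume "i \<in> {0..<n}"
    then have "i < n" by simp
    then show "?M $$ (i, id i) = 1" using Mij acyc_noloop[OF ac hS] by simp
  qed
  finally show ?thesis by simp
qed

lemma detMf_cyc:
  assumes hb: "bij_betw h {0..<n} S" and ac: "\<not> acyc S f"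
  shows "det (Mf n h f) = 0"
proof -
  let ?M = "Mf n h f"
  have hS: "h i \<in> S" if "i < n" for i using hb that unfolding bij_betw_def by auto
  have Mij: "?M $$ (i, j) = (if i = j then 1 else 0) - (if f (h i) = h j then 1 else 0)"
    if "i < n" "j < n" for i j using that unfolding Mf_def by simp
  obtain C where C: "C \<subseteq> S" "C \<noteq> {}" "f ` C \<subseteq> C" using ac unfolding acyc_def by blast
  define U where "U = \<Union>{D. D \<subseteq> S \<and> f ` D \<subseteq> D}"
  have US: "U \<subseteq> S" unfolding U_def by blast
  have Ucl: "f ` U \<subseteq> U" unfolding U_def by blast
  have CU: "C \<subseteq> U" using C unfolding U_def by blast
  have Uback: "v \<in> U" if "v \<in> S" "f v \<in> U" for v
  proof -
    have "insert v U \<subseteq> S" using US that by blast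
    moreover have "f ` insert v U \<subseteq> insert v U" using Ucl that by blast
    ultimately show ?thesis unfolding U_def by blast
  qed
  define x where "x = vec n (\<lambda>j. if h j \<in> U then 1 else (0::real))"
  have xc: "x \<in> carrier_vec n" unfolding x_def by simp
  obtain v where "v \<in> C" using C(2) by blast
  then have "v \<in> S" using C(1) by blast
  then obtain j where j: "j < n" "h j = v" using hb unfolding bij_betw_def by force
  have "x $ j = 1" using j \<open>v \<in> C\<close> CU unfolding x_def by auto
  then have xnz: "x \<noteq> 0\<^sub>v n" using j(1) by auto
  have Mx: "?M *\<^sub>v x = 0\<^sub>v n"
  proof (rule eq_vecI)
    show "dim_vec (?M *\<^sub>v x) = dim_vec (0\<^sub>v n :: real vec)" by simp
  next
    fix i assume "i < dim_vec (0\<^sub>v n :: real vec)"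
    then have i: "i < n" by simp
    have "(?M *\<^sub>v x) $ i = (\<Sum>k\<in>{0..<n}. ?M $$ (i, k) * x $ k)"
      using i unfolding x_def by (simp add: scalar_prod_def)
    also have "\<dots> = (\<Sum>k\<in>{0..<n}. (if i = k then (if h k \<in> U then 1 else 0) else 0)
                 - (if f (h i) = h k \<and> h k \<in> U then 1 else 0))"
      by (rule sum.cong) (auto simp: Mij i x_def)
    also have "\<dots> = (if h i \<in> U then 1 else 0) - (\<Sum>k\<in>{0..<n}. (if f (h i) = h k \<and> h k \<in> U then 1 else 0))"
      using i by (simp add: sum_subtractf)
    also have "(\<Sum>k\<in>{0..<n}. (if f (h i) = h k \<and> h k \<in> U then 1 else 0)) =
               (\<Sum>u\<in>S. (if f (h i) = u \<and> u \<in> U then 1 else (0::real)))"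
      using sum.reindex_bij_betw[OF hb, of "\<lambda>u. if f (h i) = u \<and> u \<in> U then 1 else (0::real)"] by simp
    also have "\<dots> = (if f (h i) \<in> U then 1 else 0)"
    proof -
      have "(\<Sum>u\<in>S. (if f (h i) = u \<and> u \<in> U then 1 else (0::real))) =
            (\<Sum>u\<in>S. (if f (h i) = u then (if u \<in> U then 1 else 0) else (0::real)))"
        by (rule sum.cong) auto
      also have "\<dots> = (if f (h i) \<in> S then (if f (h i) \<in> U then 1 else 0) else 0)"
      proof -
        have finS: "finite S" using bij_betw_finite[OF hb] by simp
        show ?thesis using sum.delta'[OF finS, of "f (h i)" "\<lambda>u. if u \<in> U then 1 else (0::real)"] by simp
      qed
      finally show ?thesis using US by auto
    qed
    also have "(if h i \<in> U then 1 else 0) - (if f (h i) \<in> U then 1 else 0) = (0::real)"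
      using Ucl Uback[OF hS[OF i]] by auto
    finally show "(?M *\<^sub>v x) $ i = 0\<^sub>v n $ i" using i by simp
  qed
  show ?thesis
    using det_0_iff_vec_prod_zero[OF Mf_carrier] xc xnz Mx by blast
qed


context
  fixes V :: "'a set" and E :: "'a set set" and r :: 'a and n :: nat and h :: "nat \<Rightarrow> 'a"
  assumes sg: "simple_graph V E" and rV: "r \<in> V" and hb: "bij_betw h {0..<n} (V - {r})"
begin

lemma hS: "i < n \<Longrightarrow> h i \<in> V - {r}" using hb unfolding bij_betw_def by auto

lemma h_inj: "i < n \<Longrightarrow> j < n \<Longrightarrow> h i = h j \<longleftrightarrow> i = j"
  using hb unfolding bij_betw_def inj_on_def by auto

lemma lap_entry:
  assumes i: "i < n" and j: "j < n"
  shows "reduced r (laplacian V E c) (h i) (h j) =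
    (\<Sum>k\<in>V. Defs.adj_mat E c (h i) k * ((if i = j then 1 else 0) - (if k = h j then 1 else 0)))"
proof -
  have hi: "h i \<in> V" "h i \<noteq> r" and hj: "h j \<in> V" "h j \<noteq> r" using hS[OF i] hS[OF j] by auto
  have finV: "finite V" using finV[OF sg rV] .
  have "(\<Sum>k\<in>V. Defs.adj_mat E c (h i) k * ((if i = j then 1 else 0) - (if k = h j then 1 else 0))) =
        (\<Sum>k\<in>V. (if i = j then Defs.adj_mat E c (h i) k else 0)) - (\<Sum>k\<in>V. (if h j = k then Defs.adj_mat E c (h i) k else 0))"
  proof -
    have "(\<Sum>k\<in>V. Defs.adj_mat E c (h i) k * ((if i = j then 1 else 0) - (if k = h j then 1 else 0))) =
        (\<Sum>k\<in>V. (if i = j then Defs.adj_mat E c (h i) k else 0) - (if h j = k then Defs.adj_mat E c (h i) k else 0))"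
      by (rule sum.cong) auto
    then show ?thesis by (simp add: sum_subtractf)
  qed
  also have "\<dots> = (if i = j then (\<Sum>k\<in>V. Defs.adj_mat E c (h i) k) else 0) - Defs.adj_mat E c (h i) (h j)"
    using finV hj by simp
  finally show ?thesis
    unfolding reduced_def laplacian_def using hi hj h_inj[OF i j] by simp
qed

lemma matrix_tree:
  "det (mat n n (\<lambda>(i,j). reduced r (laplacian V E c) (h i) (h j))) =
   (\<Sum>T\<in>spanning_trees V E. \<Prod>e\<in>T. c e)"
proof -
  let ?S = "V - {r}"
  let ?M = "mat n n (\<lambda>(i,j). reduced r (laplacian V E c) (h i) (h j))"
  let ?P = "{p. p permutes {0..<n}}"
  let ?a = "Defs.adj_mat E c"
  let ?PE = "PiE ?S (\<lambda>_. V)"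
  define h' where "h' = the_inv_into {0..<n} h"
  have finV: "finite V" using finV[OF sg rV] .
  have finS: "finite ?S" using finV by simp
  have h'1: "h' v < n" "h (h' v) = v" if "v \<in> ?S" for v
  proof -
    show "h (h' v) = v" unfolding h'_def using f_the_inv_into_f_bij_betw[OF hb] that by blast
    have "bij_betw h' ?S {0..<n}" unfolding h'_def by (rule bij_betw_the_inv_into[OF hb])
    then show "h' v < n" using that unfolding bij_betw_def by auto
  qed
  have h'2: "h' (h i) = i" if "i < n" for i
    unfolding h'_def using hb that the_inv_into_f_f unfolding bij_betw_def by fastforce
  define A where "A f = (\<Prod>v\<in>?S. ?a v (f v))" for f
  have step1: "(\<Prod>i=0..<n. ?M $$ (i, p i)) = (\<Sum>f\<in>?PE. A f * (\<Prod>i=0..<n. Mf n h f $$ (i, p i)))"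
    if p: "p permutes {0..<n}" for p
  proof -
    have pin: "p i < n" if "i < n" for i using permutes_in_image[OF p] that by simp
    define m where "m i k = (if i = p i then 1 else 0) - (if k = h (p i) then 1 else (0::real))" for i k
    define G where "G v = (\<Sum>k\<in>V. ?a v k * m (h' v) k)" for v
    have "(\<Prod>i=0..<n. ?M $$ (i, p i)) = (\<Prod>i=0..<n. G (h i))"
    proof (rule prod.cong[OF refl])
      fix i assume "i \<in> {0..<n}"
      then have i: "i < n" by simp
      show "?M $$ (i, p i) = G (h i)"
        using i pin[OF i] lap_entry[OF i pin[OF i], of c] unfolding G_def m_def h'2[OF i] by simp
    qed
    also have "\<dots> = (\<Prod>v\<in>?S. G v)" by (rule prod.reindex_bij_betw[OF hb])
    also have "\<dots> = (\<Sum>f\<in>?PE. \<Prod>v\<in>?S. ?a v (f v) * m (h' v) (f v))"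
      unfolding G_def by (rule prod_sum_PiE) (use finS finV in auto)
    also have "\<dots> = (\<Sum>f\<in>?PE. A f * (\<Prod>i=0..<n. Mf n h f $$ (i, p i)))"
    proof (rule sum.cong[OF refl])
      fix f assume "f \<in> ?PE"
      have "(\<Prod>v\<in>?S. m (h' v) (f v)) = (\<Prod>i=0..<n. m (h' (h i)) (f (h i)))"
        by (rule prod.reindex_bij_betw[OF hb, symmetric])
      also have "\<dots> = (\<Prod>i=0..<n. Mf n h f $$ (i, p i))"
      proof (rule prod.cong[OF refl])
        fix i assume "i \<in> {0..<n}"
        then have i: "i < n" by simp
        show "m (h' (h i)) (f (h i)) = Mf n h f $$ (i, p i)"
          unfolding h'2[OF i] m_def Mf_def using i pin[OF i] by auto
      qed
      finally show "(\<Prod>v\<in>?S. ?a v (f v) * m (h' v) (f v)) = A f * (\<Prod>i=0..<n. Mf n h f $$ (i, p i))"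
        unfolding A_def prod.distrib by simp
    qed
    finally show ?thesis .
  qed
  have "det ?M = (\<Sum>p\<in>?P. signof p * (\<Prod>i=0..<n. ?M $$ (i, p i)))"
    by (rule det_def') simp
  also have "\<dots> = (\<Sum>p\<in>?P. \<Sum>f\<in>?PE. A f * (signof p * (\<Prod>i=0..<n. Mf n h f $$ (i, p i))))"
  proof (rule sum.cong[OF refl])
    fix p assume "p \<in> ?P"
    then have p: "p permutes {0..<n}" by simp
    show "signof p * (\<Prod>i=0..<n. ?M $$ (i, p i)) = (\<Sum>f\<in>?PE. A f * (signof p * (\<Prod>i=0..<n. Mf n h f $$ (i, p i))))"
      unfolding step1[OF p] sum_distrib_left by (simp add: mult.left_commute)
  qed
  also have "\<dots> = (\<Sum>f\<in>?PE. \<Sum>p\<in>?P. A f * (signof p * (\<Prod>i=0..<n. Mf n h f $$ (i, p i))))"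
    by (rule sum.swap)
  also have "\<dots> = (\<Sum>f\<in>?PE. A f * det (Mf n h f))"
    by (rule sum.cong[OF refl]) (simp add: det_def'[OF Mf_carrier] sum_distrib_left)
  also have "\<dots> = (\<Sum>f\<in>AF V E r. \<Prod>v\<in>?S. c {v, f v})"
  proof (rule sum.mono_neutral_cong_right)
    show "finite ?PE" using finS finV by (simp add: finite_PiE)
  next
    show "AF V E r \<subseteq> ?PE" unfolding AF_def by blast
  next
    show "\<forall>f\<in>?PE - AF V E r. A f * det (Mf n h f) = 0"
    proof
      fix f assume f: "f \<in> ?PE - AF V E r"
      show "A f * det (Mf n h f) = 0"
      proof (cases "acyc ?S f")
        case False
        then show ?thesis using detMf_cyc[OF hb] by simp
      next
        case True
        then obtain v where v: "v \<in> ?S" "{v, f v} \<notin> E" using f unfolding AF_def by blast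
        have "?a v (f v) = 0" using v(2) unfolding Defs.adj_mat_def by simp
        then have "A f = 0" unfolding A_def using finS v(1) by (metis prod_zero_iff)
        then show ?thesis by simp
      qed
    qed
  next
    fix f assume f: "f \<in> AF V E r"
    have "det (Mf n h f) = 1" using detMf_acyc[OF hb] f unfolding AF_def by blast
    moreover have "A f = (\<Prod>v\<in>?S. c {v, f v})"
      unfolding A_def Defs.adj_mat_def using f unfolding AF_def by (intro prod.cong) auto
    ultimately show "A f * det (Mf n h f) = (\<Prod>v\<in>?S. c {v, f v})" by simp
  qed
  also have "\<dots> = (\<Sum>f\<in>AF V E r. \<Prod>e\<in>tof ?S f. c e)"
  proof (rule sum.cong[OF refl])
    fix f assume f: "f \<in> AF V E r"
    then have "acyc ?S f" unfolding AF_def by blast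
    then show "(\<Prod>v\<in>?S. c {v, f v}) = (\<Prod>e\<in>tof ?S f. c e)"
      unfolding tof_def using prod.reindex[OF tof_inj, of ?S f c] by simp
  qed
  also have "\<dots> = (\<Sum>T\<in>spanning_trees V E. \<Prod>e\<in>T. c e)"
    by (rule sum.reindex_bij_betw[OF AF_bij[OF sg rV]])
  finally show ?thesis .
qed

end


lemma coeff_pCons_1[simp]: "coeff (pCons a p) 1 = coeff p 0"
  by (simp add: One_nat_def del: One_nat_def[symmetric])

lemma coeff_pCons_2[simp]: "coeff (pCons a p) 2 = coeff p 1"
  by (simp add: numeral_2_eq_2)

lemma coeff3: "coeff ([:\<alpha>, \<beta>, \<gamma>:] * q) 0 = \<alpha> * coeff q 0"
  "coeff ([:\<alpha>, \<beta>, \<gamma>:] * q) 1 = \<alpha> * coeff q 1 + \<beta> * coeff q 0"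
  "coeff ([:\<alpha>, \<beta>, \<gamma>:] * q) 2 = \<alpha> * coeff q 2 + \<beta> * coeff q 1 + \<gamma> * coeff q 0"
  by (simp_all add: add.assoc)

lemma prod3_coeffs:
  fixes a x y :: "'i \<Rightarrow> real"
  assumes "finite K"
  shows "coeff (\<Prod>i\<in>K. [:a i, a i * x i, a i * y i:]) 0 = (\<Prod>i\<in>K. a i) \<and>
         coeff (\<Prod>i\<in>K. [:a i, a i * x i, a i * y i:]) 1 = (\<Prod>i\<in>K. a i) * (\<Sum>i\<in>K. x i) \<and>
         coeff (\<Prod>i\<in>K. [:a i, a i * x i, a i * y i:]) 2 =
           (\<Prod>i\<in>K. a i) * ((\<Sum>i\<in>K. y i) + ((\<Sum>i\<in>K. x i)\<^sup>2 - (\<Sum>i\<in>K. (x i)\<^sup>2)) / 2)"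
  using assms
proof (induction K rule: finite_induct)
  case empty
  then show ?case by simp
next
  case (insert j F)
  let ?q = "\<Prod>i\<in>F. [:a i, a i * x i, a i * y i:]"
  have e: "(\<Prod>i\<in>insert j F. [:a i, a i * x i, a i * y i:]) = [:a j, a j * x j, a j * y j:] * ?q"
    using insert by simp
  have c0: "coeff ?q 0 = prod a F" and c1: "coeff ?q 1 = prod a F * sum x F"
    and c2: "coeff ?q 2 = prod a F * (sum y F + ((sum x F)\<^sup>2 - (\<Sum>i\<in>F. (x i)\<^sup>2)) / 2)"
    using insert.IH by auto
  have s: "prod a (insert j F) = a j * prod a F" "sum x (insert j F) = x j + sum x F"
    "sum y (insert j F) = y j + sum y F" "(\<Sum>i\<in>insert j F. (x i)\<^sup>2) = (x j)\<^sup>2 + (\<Sum>i\<in>F. (x i)\<^sup>2)"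
    using insert by simp_all
  show ?case unfolding e coeff3 c0 c1 c2 s
    by (simp add: power2_eq_square field_simps)
qed

lemma xpow_coeff: "coeff ([:0, 1:] ^ m * q) k = (if k < m then 0 else coeff q (k - m))"
proof (induction m arbitrary: k)
  case 0
  then show ?case by simp
next
  case (Suc m)
  have "[:0, 1:] ^ Suc m * q = pCons 0 ([:0, 1:] ^ m * q)" by (simp add: mult.assoc)
  then show ?case using Suc by (cases k) auto
qed

lemma coeff_0_prod: "coeff (\<Prod>i\<in>K. f i) 0 = (\<Prod>i\<in>K. coeff (f i) 0)"
  by (simp add: poly_0_coeff_0[symmetric] poly_prod)

lemma coeff_signof: "coeff (signof p * q) k = signof p * coeff q k"
  by (simp add: of_int_poly)

definition moved :: "(nat \<Rightarrow> nat) \<Rightarrow> nat \<Rightarrow> nat set" where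
  "moved p n = {i \<in> {0..<n}. p i \<noteq> i}"

lemma moved_closed: assumes "p permutes {0..<n}" "i \<in> moved p n" shows "p i \<in> moved p n"
proof -
  have i: "i < n" "p i \<noteq> i" using assms(2) unfolding moved_def by auto
  have "p (p i) \<noteq> p i"
  proof
    assume "p (p i) = p i"
    then have "p i = i" using permutes_inj[OF assms(1)] by (meson injD)
    then show False using i(2) by simp
  qed
  moreover have "p i < n" using permutes_in_image[OF assms(1)] i(1) by simp
  ultimately show ?thesis unfolding moved_def by simp
qed

lemma moved_empty: assumes "p permutes {0..<n}" "moved p n = {}" shows "p = id"
proof
  fix i show "p i = id i"
  proof (cases "i < n")
    case True then show ?thesis using assms(2) unfolding moved_def by auto
  next
    case False then show ?thesis using permutes_not_in[OF assms(1)] by simp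
  qed
qed

lemma moved_not1: assumes "p permutes {0..<n}" shows "card (moved p n) \<noteq> 1"
proof
  assume "card (moved p n) = 1"
  then obtain a where a: "moved p n = {a}" by (auto simp: card_Suc_eq)
  then have "p a \<in> {a}" using moved_closed[OF assms, of a] by auto
  then show False using a unfolding moved_def by auto
qed

lemma moved_2: assumes p: "p permutes {0..<n}" "card (moved p n) = 2"
  shows "\<exists>a b. a < b \<and> b < n \<and> p = Transposition.transpose a b"
proof -
  obtain a b where ab: "a \<noteq> b" "moved p n = {a, b}" using p(2) by (auto simp: card_Suc_eq numeral_2_eq_2)
  have pa: "p a = b"
  proof -
    have "p a \<in> {a, b}" using moved_closed[OF p(1), of a] ab by auto
    moreover have "p a \<noteq> a" using ab unfolding moved_def by auto
    ultimately show ?thesis by auto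
  qed
  have pb: "p b = a"
  proof -
    have "p b \<in> {a, b}" using moved_closed[OF p(1), of b] ab by auto
    moreover have "p b \<noteq> b" using ab unfolding moved_def by blast
    ultimately show ?thesis by auto
  qed
  have abn: "a < n" "b < n" using ab unfolding moved_def by auto
  have eq: "p = Transposition.transpose a b"
  proof
    fix i show "p i = Transposition.transpose a b i"
    proof (cases "i = a \<or> i = b")
      case True then show ?thesis using pa pb by auto
    next
      case False
      then have "i \<notin> moved p n" using ab by auto
      then have "p i = i"
        using permutes_not_in[OF p(1), of i] unfolding moved_def by (cases "i < n") auto
      then show ?thesis using False by simp
    qed
  qed
  show ?thesis
  proof (cases "a < b")
    case True then show ?thesis using eq abn by blast
  next
    case False
    then have "b < a" using ab(1) by simp
    then show ?thesis using eq abn transpose_commute[of a b] by metis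
  qed
qed

lemma moved_transpose: "a \<noteq> b \<Longrightarrow> a < n \<Longrightarrow> b < n \<Longrightarrow> moved (Transposition.transpose a b) n = {a, b}"
  unfolding moved_def by (auto simp: transpose_def)

lemma sym_sum:
  fixes g :: "nat \<Rightarrow> nat \<Rightarrow> real"
  assumes sym: "\<And>i k. g i k = g k i"
  shows "(\<Sum>i=0..<n. \<Sum>k=0..<n. g i k) = (\<Sum>i=0..<n. g i i) + 2 * (\<Sum>a=0..<n. \<Sum>b=Suc a..<n. g a b)"
proof (induction n)
  case 0
  then show ?case by simp
next
  case (Suc n)
  have L: "(\<Sum>i=0..<Suc n. \<Sum>k=0..<Suc n. g i k) = (\<Sum>i=0..<n. \<Sum>k=0..<n. g i k) + 2 * (\<Sum>i=0..<n. g i n) + g n n"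
  proof -
    have e1: "(\<Sum>i=0..<Suc n. \<Sum>k=0..<Suc n. g i k) = (\<Sum>i=0..<n. \<Sum>k=0..<n. g i k) + (\<Sum>i=0..<n. g i n) + ((\<Sum>k=0..<n. g n k) + g n n)"
      by (simp only: sum.atLeastLessThan_Suc[OF le0] sum.distrib)
    have e2: "(\<Sum>k=0..<n. g n k) = (\<Sum>k=0..<n. g k n)"
      by (rule sum.cong[OF refl]) (rule sym)
    show ?thesis using e1 e2 by linarith
  qed
  have R: "(\<Sum>a=0..<Suc n. \<Sum>b=Suc a..<Suc n. g a b) = (\<Sum>a=0..<n. \<Sum>b=Suc a..<n. g a b) + (\<Sum>a=0..<n. g a n)"
  proof -
    have "(\<Sum>a=0..<Suc n. \<Sum>b=Suc a..<Suc n. g a b) = (\<Sum>a=0..<n. \<Sum>b=Suc a..<Suc n. g a b)"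
      by simp
    also have "\<dots> = (\<Sum>a=0..<n. (\<Sum>b=Suc a..<n. g a b) + g a n)"
      by (rule sum.cong[OF refl]) (simp add: sum.atLeastLessThan_Suc)
    finally show ?thesis by (simp add: sum.distrib)
  qed
  show ?case unfolding L R Suc.IH by simp
qed

lemma arith_aux: "(x::real) = a + (b - c) / 2 + (- X) \<Longrightarrow> x = a + (b - (c + 2 * X)) / 2"
  by (simp add: field_simps)

lemma coefN:
  fixes P Q :: "nat \<Rightarrow> nat \<Rightarrow> real" and n :: nat
  defines "N \<equiv> mat n n (\<lambda>(i,j). [:if i = j then 1 else 0, P i j, Q i j:])"
  shows "coeff (det N) 1 = (\<Sum>i=0..<n. P i i)"
    and "coeff (det N) 2 = (\<Sum>i=0..<n. Q i i) + ((\<Sum>i=0..<n. P i i)\<^sup>2 - (\<Sum>i=0..<n. \<Sum>k=0..<n. P i k * P k i)) / 2"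
proof -
  let ?Perm = "{p. p permutes {0..<n}}"
  have finPerm: "finite ?Perm" by (simp add: finite_permutations)
  define tm where "tm p = (\<Prod>i\<in>{0..<n}. [:if i = p i then 1 else 0, P i (p i), Q i (p i):])" for p
  have detN: "det N = (\<Sum>p\<in>?Perm. signof p * tm p)"
  proof -
    have "N \<in> carrier_mat n n" unfolding N_def by simp
    then have "det N = (\<Sum>p\<in>?Perm. signof p * (\<Prod>i=0..<n. N $$ (i, p i)))" by (rule det_def')
    also have "\<dots> = (\<Sum>p\<in>?Perm. signof p * tm p)"
    proof (rule sum.cong[OF refl])
      fix p assume "p \<in> ?Perm"
      then have pin: "i < n \<Longrightarrow> p i < n" for i using permutes_in_image by fastforce
      show "signof p * (\<Prod>i=0..<n. N $$ (i, p i)) = signof p * tm p"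
        unfolding tm_def N_def by (rule arg_cong[where f = "\<lambda>x. signof p * x"], rule prod.cong) (auto simp: pin)
    qed
    finally show ?thesis .
  qed
  have cdet: "coeff (det N) k = (\<Sum>p\<in>?Perm. signof p * coeff (tm p) k)" for k
    unfolding detN coeff_sum coeff_signof ..
  have tmfac: "tm p = [:0, 1:] ^ card (moved p n) * ((\<Prod>i\<in>moved p n. [:P i (p i), Q i (p i):]) *
      (\<Prod>i\<in>{0..<n} - moved p n. [:1, P i i, Q i i:]))" if p: "p permutes {0..<n}" for p
  proof -
    have sub: "moved p n \<subseteq> {0..<n}" unfolding moved_def by auto
    have fin: "finite (moved p n)" using sub finite_subset by blast
    have "tm p = (\<Prod>i\<in>{0..<n} - moved p n. [:if i = p i then 1 else 0, P i (p i), Q i (p i):]) *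
                 (\<Prod>i\<in>moved p n. [:if i = p i then 1 else 0, P i (p i), Q i (p i):])"
      unfolding tm_def by (rule prod.subset_diff[OF sub]) simp
    also have "(\<Prod>i\<in>{0..<n} - moved p n. [:if i = p i then 1 else 0, P i (p i), Q i (p i):]) =
               (\<Prod>i\<in>{0..<n} - moved p n. [:1, P i i, Q i i:])"
      by (rule prod.cong[OF refl]) (auto simp: moved_def)
    also have "(\<Prod>i\<in>moved p n. [:if i = p i then 1 else 0, P i (p i), Q i (p i):]) =
               (\<Prod>i\<in>moved p n. [:0, 1:] * [:P i (p i), Q i (p i):])"
      by (rule prod.cong[OF refl]) (auto simp: moved_def)
    also have "\<dots> = [:0, 1:] ^ card (moved p n) * (\<Prod>i\<in>moved p n. [:P i (p i), Q i (p i):])"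
      by (simp only: prod.distrib prod_constant)
    finally show ?thesis by (simp add: ac_simps)
  qed
  have small: "coeff (tm p) k = 0" if "p permutes {0..<n}" "k < card (moved p n)" for p k
    using that by (simp add: tmfac mult.assoc xpow_coeff)
  have card_ge2: "2 \<le> card (moved p n)" if p: "p permutes {0..<n}" "p \<noteq> id" for p
  proof -
    have "moved p n \<noteq> {}" using moved_empty[OF p(1)] p(2) by blast
    moreover have "finite (moved p n)" unfolding moved_def by simp
    ultimately have "card (moved p n) \<noteq> 0" by simp
    then show ?thesis using moved_not1[OF p(1)] by linarith
  qed
  have tm_id: "tm id = (\<Prod>i\<in>{0..<n}. [:1, 1 * P i i, 1 * Q i i:])" unfolding tm_def by simp
  note pc = prod3_coeffs[of "{0..<n}" "\<lambda>_. 1" "\<lambda>i. P i i" "\<lambda>i. Q i i", simplified]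
  have idc1: "coeff (tm id) 1 = (\<Sum>i=0..<n. P i i)" using pc unfolding tm_id by simp
  have idc2: "coeff (tm id) 2 = (\<Sum>i=0..<n. Q i i) + ((\<Sum>i=0..<n. P i i)\<^sup>2 - (\<Sum>i=0..<n. (P i i)\<^sup>2)) / 2"
    using pc unfolding tm_id by simp
  have split: "(\<Sum>p\<in>?Perm. signof p * coeff (tm p) k) = coeff (tm id) k + (\<Sum>p\<in>?Perm - {id}. signof p * coeff (tm p) k)" for k
    by (subst sum.remove[OF finPerm, of id]) (auto simp: permutes_id)
  show "coeff (det N) 1 = (\<Sum>i=0..<n. P i i)"
  proof -
    have "(\<Sum>p\<in>?Perm - {id}. signof p * coeff (tm p) 1) = 0"
    proof (rule sum.neutral, intro ballI)
      fix p assume "p \<in> ?Perm - {id}"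
      then have p: "p permutes {0..<n}" "p \<noteq> id" by auto
      show "signof p * coeff (tm p) 1 = 0" using small[OF p(1)] card_ge2[OF p] by simp
    qed
    then show ?thesis using cdet split idc1 by simp
  qed
  define D where "D = Sigma {0..<n} (\<lambda>a. {Suc a..<n})"
  define T2 where "T2 = {p \<in> ?Perm. card (moved p n) = 2}"
  have bij: "bij_betw (\<lambda>(a,b). Transposition.transpose a b) D T2"
    unfolding bij_betw_def
  proof
    show "inj_on (\<lambda>(a,b). Transposition.transpose a b) D"
    proof (rule inj_onI, clarify)
      fix a b a' b' assume ab: "(a, b) \<in> D" "(a', b') \<in> D"
        and eq: "Transposition.transpose a b = Transposition.transpose a' b'"
      have "moved (Transposition.transpose a b) n = {a, b}" using ab by (intro moved_transpose) (auto simp: D_def)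
      moreover have "moved (Transposition.transpose a' b') n = {a', b'}" using ab by (intro moved_transpose) (auto simp: D_def)
      ultimately have "{a, b} = {a', b'}" using eq by simp
      then show "a = a' \<and> b = b'" using ab unfolding D_def by (auto simp: doubleton_eq_iff)
    qed
    show "(\<lambda>(a,b). Transposition.transpose a b) ` D = T2"
    proof
      show "(\<lambda>(a,b). Transposition.transpose a b) ` D \<subseteq> T2"
      proof clarify
        fix a b assume ab: "(a, b) \<in> D"
        then have "a < n" "b < n" "a \<noteq> b" unfolding D_def by auto
        then show "Transposition.transpose a b \<in> T2"
          unfolding T2_def using moved_transpose[of a b n] by (auto intro: permutes_swap_id)
      qed
      show "T2 \<subseteq> (\<lambda>(a,b). Transposition.transpose a b) ` D"
      proof
        fix p assume "p \<in> T2"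
        then have p: "p permutes {0..<n}" "card (moved p n) = 2" unfolding T2_def by auto
        then obtain a b where "a < b" "b < n" "p = Transposition.transpose a b" using moved_2 by blast
        then show "p \<in> (\<lambda>(a,b). Transposition.transpose a b) ` D" unfolding D_def by force
      qed
    qed
  qed
  have tcoef: "signof (Transposition.transpose a b) * coeff (tm (Transposition.transpose a b)) 2 = - (P a b * P b a)"
    if ab: "(a, b) \<in> D" for a b
  proof -
    let ?t = "Transposition.transpose a b"
    have abn: "a < n" "b < n" "a \<noteq> b" using ab unfolding D_def by auto
    have perm: "?t permutes {0..<n}" using abn by (intro permutes_swap_id) auto
    have mv: "moved ?t n = {a, b}" using moved_transpose abn by blast
    have "coeff (tm ?t) 2 = coeff ((\<Prod>i\<in>{a, b}. [:P i (?t i), Q i (?t i):]) *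
      (\<Prod>i\<in>{0..<n} - {a, b}. [:1, P i i, Q i i:])) 0"
      unfolding tmfac[OF perm] mv using abn by (simp add: xpow_coeff)
    also have "\<dots> = P a b * P b a"
      using abn by (simp add: coeff_mult_0 coeff_0_prod)
    finally show ?thesis using abn by (simp add: sign_swap_id)
  qed
  show "coeff (det N) 2 = (\<Sum>i=0..<n. Q i i) + ((\<Sum>i=0..<n. P i i)\<^sup>2 - (\<Sum>i=0..<n. \<Sum>k=0..<n. P i k * P k i)) / 2"
  proof -
    have "(\<Sum>p\<in>?Perm - {id}. signof p * coeff (tm p) 2) = (\<Sum>p\<in>T2. signof p * coeff (tm p) 2)"
    proof (rule sum.mono_neutral_right)
      show "finite (?Perm - {id})" using finPerm by simp
      show "T2 \<subseteq> ?Perm - {id}"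
      proof
        fix p assume "p \<in> T2"
        then have "p permutes {0..<n}" "card (moved p n) = 2" unfolding T2_def by auto
        moreover have "moved id n = {}" unfolding moved_def by simp
        ultimately show "p \<in> ?Perm - {id}" by auto
      qed
      show "\<forall>p\<in>?Perm - {id} - T2. signof p * coeff (tm p) 2 = 0"
      proof
        fix p assume "p \<in> ?Perm - {id} - T2"
        then have p: "p permutes {0..<n}" "p \<noteq> id" "card (moved p n) \<noteq> 2" unfolding T2_def by auto
        then have "2 < card (moved p n)" using card_ge2[OF p(1,2)] by linarith
        then show "signof p * coeff (tm p) 2 = 0" using small[OF p(1)] by simp
      qed
    qed
    also have "\<dots> = (\<Sum>(a,b)\<in>D. signof (Transposition.transpose a b) * coeff (tm (Transposition.transpose a b)) 2)"
      using sum.reindex_bij_betw[OF bij, of "\<lambda>p. signof p * coeff (tm p) 2"]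
      by (simp add: case_prod_beta')
    also have "\<dots> = (\<Sum>(a,b)\<in>D. - (P a b * P b a))"
      by (rule sum.cong[OF refl]) (use tcoef in auto)
    also have "\<dots> = - (\<Sum>a=0..<n. \<Sum>b=Suc a..<n. P a b * P b a)"
      unfolding D_def by (simp add: sum.Sigma[symmetric] sum_negf)
    finally have T: "(\<Sum>p\<in>?Perm - {id}. signof p * coeff (tm p) 2) = - (\<Sum>a=0..<n. \<Sum>b=Suc a..<n. P a b * P b a)" .
    have tr: "(\<Sum>i=0..<n. \<Sum>k=0..<n. P i k * P k i) = (\<Sum>i=0..<n. (P i i)\<^sup>2) + 2 * (\<Sum>a=0..<n. \<Sum>b=Suc a..<n. P a b * P b a)"
    proof -
      have sy: "\<And>i k. P i k * P k i = P k i * P i k" by (simp add: mult.commute)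
      show ?thesis using sym_sum[of "\<lambda>i k. P i k * P k i", OF sy, of n] unfolding power2_eq_square .
    qed
    have "coeff (det N) 2 = coeff (tm id) 2 + (- (\<Sum>a=0..<n. \<Sum>b=Suc a..<n. P a b * P b a))"
      using cdet[of 2] split[of 2] T by linarith
    then show ?thesis unfolding idc2 tr by (rule arith_aux)
  qed
qed


lemma sum_pCons3: "(\<Sum>k\<in>K. [:a k, b k, c k:]) = [:(\<Sum>k\<in>K. a k), (\<Sum>k\<in>K. b k), (\<Sum>k\<in>K. c k):]"
  by (induction K rule: infinite_finite_induct) simp_all

interpretation cpoly_hom: comm_ring_hom "\<lambda>a::real. [:a:]"
  by unfold_locales (simp_all add: one_pCons)

lemma poly_det: "det (map_mat (\<lambda>p. poly p s) M) = poly (det M) (s::real)"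
proof -
  interpret ev: comm_ring_hom "\<lambda>p. poly p s" by unfold_locales simp_all
  show ?thesis by (rule ev.hom_det)
qed

lemma det_coeffs:
  fixes A P Q :: "real mat"
  assumes A: "A \<in> carrier_mat n n" and P: "P \<in> carrier_mat n n" and Q: "Q \<in> carrier_mat n n"
  defines "Mp \<equiv> mat n n (\<lambda>(i,j). [:A $$ (i,j), (A * P) $$ (i,j), (A * Q) $$ (i,j):])"
  shows "coeff (det Mp) 1 = det A * (\<Sum>i=0..<n. P $$ (i,i))"
    and "coeff (det Mp) 2 = det A * ((\<Sum>i=0..<n. Q $$ (i,i)) +
           ((\<Sum>i=0..<n. P $$ (i,i))\<^sup>2 - (\<Sum>i=0..<n. \<Sum>k=0..<n. P $$ (i,k) * P $$ (k,i))) / 2)"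
proof -
  define N where "N = mat n n (\<lambda>(i,j). [:if i = j then 1 else 0, P $$ (i,j), Q $$ (i,j):])"
  let ?Ac = "map_mat (\<lambda>a. [:a:]) A"
  have Nc: "N \<in> carrier_mat n n" unfolding N_def by simp
  have Acc: "?Ac \<in> carrier_mat n n" using A by simp
  have eq: "Mp = ?Ac * N"
  proof (rule eq_matI)
    fix i j assume ij: "i < dim_row (?Ac * N)" "j < dim_col (?Ac * N)"
    then have i: "i < n" and j: "j < n" using A Nc by auto
    have "(?Ac * N) $$ (i,j) = (\<Sum>k=0..<n. [:A $$ (i,k):] * [:if k = j then 1 else 0, P $$ (k,j), Q $$ (k,j):])"
      using i j A unfolding N_def by (simp add: scalar_prod_def)
    also have "\<dots> = (\<Sum>k=0..<n. [:(if k = j then A $$ (i,k) else 0), A $$ (i,k) * P $$ (k,j), A $$ (i,k) * Q $$ (k,j):])"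
      by (rule sum.cong[OF refl]) simp
    also have "\<dots> = [:A $$ (i,j), (A * P) $$ (i,j), (A * Q) $$ (i,j):]"
      unfolding sum_pCons3 using i j A P Q by (simp add: scalar_prod_def)
    finally show "Mp $$ (i,j) = (?Ac * N) $$ (i,j)" unfolding Mp_def using i j by simp
  qed (use A Nc in \<open>auto simp: Mp_def\<close>)
  have dM: "det Mp = [:det A:] * det N"
    unfolding eq det_mult[OF Acc Nc] cpoly_hom.hom_det ..
  have cN1: "coeff (det N) 1 = (\<Sum>i=0..<n. P $$ (i,i))"
    unfolding N_def by (rule coefN(1))
  have cN2: "coeff (det N) 2 = (\<Sum>i=0..<n. Q $$ (i,i)) +
           ((\<Sum>i=0..<n. P $$ (i,i))\<^sup>2 - (\<Sum>i=0..<n. \<Sum>k=0..<n. P $$ (i,k) * P $$ (k,i))) / 2"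
    unfolding N_def by (rule coefN(2))
  show "coeff (det Mp) 1 = det A * (\<Sum>i=0..<n. P $$ (i,i))"
    unfolding dM using cN1 by simp
  show "coeff (det Mp) 2 = det A * ((\<Sum>i=0..<n. Q $$ (i,i)) +
           ((\<Sum>i=0..<n. P $$ (i,i))\<^sup>2 - (\<Sum>i=0..<n. \<Sum>k=0..<n. P $$ (i,k) * P $$ (k,i))) / 2)"
    unfolding dM using cN2 by simp
qed


lemma mmult_assoc: "mmult S (mmult S A B) C = mmult S A (mmult S B C)"
proof (intro ext)
  fix i j
  have "mmult S (mmult S A B) C i j = (\<Sum>k\<in>S. \<Sum>l\<in>S. A i l * B l k * C k j)"
    unfolding mmult_def by (simp add: sum_distrib_right)
  also have "\<dots> = (\<Sum>l\<in>S. \<Sum>k\<in>S. A i l * B l k * C k j)" by (rule sum.swap)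
  also have "\<dots> = mmult S A (mmult S B C) i j"
    unfolding mmult_def by (simp add: sum_distrib_left mult.assoc)
  finally show "mmult S (mmult S A B) C i j = mmult S A (mmult S B C) i j" .
qed

lemma mtrace_comm: "mtrace S (mmult S A B) = mtrace S (mmult S B A)"
  unfolding mtrace_def mmult_def by (subst sum.swap) (simp add: mult.commute)

lemma mtrace_diff: "mtrace S (mmult S (\<lambda>i j. A i j - B i j) C) = mtrace S (mmult S A C) - mtrace S (mmult S B C)"
  unfolding mtrace_def mmult_def by (simp add: left_diff_distrib sum_subtractf)

lemma mtrace_half: "mtrace S (mmult S A (\<lambda>i j. B i j / 2)) = mtrace S (mmult S A B) / 2"
  unfolding mtrace_def mmult_def by (simp add: sum_divide_distrib)

definition toJ :: "nat \<Rightarrow> (nat \<Rightarrow> 'a) \<Rightarrow> ('a \<Rightarrow> 'a \<Rightarrow> real) \<Rightarrow> real mat" where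
  "toJ n h M = mat n n (\<lambda>(i,j). M (h i) (h j))"

lemma toJ_carrier[simp]: "toJ n h M \<in> carrier_mat n n" unfolding toJ_def by simp
lemma toJ_dims[simp]: "dim_row (toJ n h M) = n" "dim_col (toJ n h M) = n" unfolding toJ_def by simp_all
lemma toJ_index[simp]: "i < n \<Longrightarrow> j < n \<Longrightarrow> toJ n h M $$ (i,j) = M (h i) (h j)" unfolding toJ_def by simp

lemma laplacian_lin: "laplacian V E (\<lambda>e. f e + s * g e + t * k e) i j =
  laplacian V E f i j + s * laplacian V E g i j + t * laplacian V E k i j"
proof -
  have a: "Defs.adj_mat E (\<lambda>e. f e + s * g e + t * k e) i j' =
    Defs.adj_mat E f i j' + s * Defs.adj_mat E g i j' + t * Defs.adj_mat E k i j'" for j'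
    unfolding Defs.adj_mat_def by simp
  show ?thesis unfolding laplacian_def a by (simp add: sum.distrib sum_distrib_left algebra_simps)
qed

lemma reduced_lin: "reduced r (\<lambda>i j. A i j + s * B i j + t * C i j) i j =
  reduced r A i j + s * reduced r B i j + t * reduced r C i j"
  unfolding reduced_def by simp

context
  fixes V :: "'a set" and E :: "'a set set" and r :: 'a and n :: nat and h :: "nat \<Rightarrow> 'a"
  assumes sg: "simple_graph V E" and rV: "r \<in> V" and hb: "bij_betw h {0..<n} (V - {r})"
begin

definition "h' = the_inv_into {0..<n} h"

lemma h'_prop: "v \<in> V - {r} \<Longrightarrow> h' v < n \<and> h (h' v) = v"
proof -
  assume v: "v \<in> V - {r}"
  have "h (h' v) = v" unfolding h'_def using f_the_inv_into_f_bij_betw[OF hb] v by blast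
  moreover have "bij_betw h' (V - {r}) {0..<n}" unfolding h'_def by (rule bij_betw_the_inv_into[OF hb])
  then have "h' v < n" using v unfolding bij_betw_def by auto
  ultimately show ?thesis by simp
qed

lemma h'_h: "i < n \<Longrightarrow> h' (h i) = i"
  unfolding h'_def using hb the_inv_into_f_f unfolding bij_betw_def by fastforce

lemma finS: "finite (V - {r})" using finV[OF sg rV] by simp

lemma toJ_mmult: "toJ n h (mmult (V - {r}) A B) = toJ n h A * toJ n h B"
proof (rule eq_matI)
  fix i j assume ij: "i < dim_row (toJ n h A * toJ n h B)" "j < dim_col (toJ n h A * toJ n h B)"
  then have i: "i < n" and j: "j < n" by auto
  have "toJ n h (mmult (V - {r}) A B) $$ (i,j) = (\<Sum>k\<in>V - {r}. A (h i) k * B k (h j))"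
    using i j unfolding mmult_def by simp
  also have "\<dots> = (\<Sum>k=0..<n. A (h i) (h k) * B (h k) (h j))"
    by (rule sum.reindex_bij_betw[OF hb, symmetric])
  also have "\<dots> = (toJ n h A * toJ n h B) $$ (i,j)"
    using i j by (simp add: scalar_prod_def)
  finally show "toJ n h (mmult (V - {r}) A B) $$ (i,j) = (toJ n h A * toJ n h B) $$ (i,j)" .
qed auto

lemma mtrace_toJ: "mtrace (V - {r}) M = (\<Sum>i=0..<n. toJ n h M $$ (i,i))"
proof -
  have "mtrace (V - {r}) M = (\<Sum>i=0..<n. M (h i) (h i))"
    unfolding mtrace_def by (rule sum.reindex_bij_betw[OF hb, symmetric])
  then show ?thesis by simp
qed

lemma trPP_toJ: "(\<Sum>i=0..<n. \<Sum>k=0..<n. toJ n h M $$ (i,k) * toJ n h M $$ (k,i)) =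
  mtrace (V - {r}) (mmult (V - {r}) M M)"
proof -
  have "(\<Sum>i=0..<n. \<Sum>k=0..<n. toJ n h M $$ (i,k) * toJ n h M $$ (k,i)) =
        (\<Sum>i=0..<n. \<Sum>k=0..<n. M (h i) (h k) * M (h k) (h i))" by simp
  also have "\<dots> = (\<Sum>i=0..<n. \<Sum>k\<in>V - {r}. M (h i) k * M k (h i))"
    by (rule sum.cong[OF refl]) (rule sum.reindex_bij_betw[OF hb])
  also have "\<dots> = (\<Sum>u\<in>V - {r}. \<Sum>k\<in>V - {r}. M u k * M k u)"
    by (rule sum.reindex_bij_betw[OF hb])
  finally show ?thesis unfolding mtrace_def mmult_def .
qed

lemma fromJ: "u \<in> V - {r} \<Longrightarrow> v \<in> V - {r} \<Longrightarrow> M u v = toJ n h M $$ (h' u, h' v)"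
  using h'_prop[of u] h'_prop[of v] by simp

lemma minv_toJ:
  assumes X: "X = toJ n h LG" and XY: "X * Y = 1\<^sub>m n" and YX: "Y * X = 1\<^sub>m n" and Yc: "Y \<in> carrier_mat n n"
  defines "Yf \<equiv> \<lambda>u v. if u \<in> V - {r} \<and> v \<in> V - {r} then Y $$ (h' u, h' v) else 0"
  shows "minv (V - {r}) LG = Yf" and "toJ n h Yf = Y"
proof -
  let ?S = "V - {r}"
  show tY: "toJ n h Yf = Y"
  proof (rule eq_matI)
    fix i j assume "i < dim_row Y" "j < dim_col Y"
    then have i: "i < n" and j: "j < n" using Yc by auto
    show "toJ n h Yf $$ (i,j) = Y $$ (i,j)"
      using i j hS[OF sg rV hb i] hS[OF sg rV hb j] unfolding Yf_def by (simp add: h'_h)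
  qed (use Yc in auto)
  have inv: "is_inverse_on ?S LG Yf"
    unfolding is_inverse_on_def
  proof (intro ballI conjI)
    fix u v assume u: "u \<in> ?S" and v: "v \<in> ?S"
    have hu: "h' u < n" "h' v < n" using h'_prop u v by auto
    have uv: "h' u = h' v \<longleftrightarrow> u = v" using h'_prop[OF u] h'_prop[OF v] by metis
    show "mmult ?S LG Yf u v = (if u = v then 1 else 0)"
      using fromJ[OF u v, of "mmult ?S LG Yf"] hu uv unfolding toJ_mmult tY X[symmetric] XY by simp
    show "mmult ?S Yf LG u v = (if u = v then 1 else 0)"
      using fromJ[OF u v, of "mmult ?S Yf LG"] hu uv unfolding toJ_mmult tY X[symmetric] YX by simp
  qed
  have out: "\<forall>i j. i \<notin> ?S \<or> j \<notin> ?S \<longrightarrow> Yf i j = 0" unfolding Yf_def by auto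
  show "minv ?S LG = Yf"
    unfolding minv_def
  proof (rule the_equality)
    show "is_inverse_on ?S LG Yf \<and> (\<forall>i j. i \<notin> ?S \<or> j \<notin> ?S \<longrightarrow> Yf i j = 0)" using inv out by blast
  next
    fix B assume B: "is_inverse_on ?S LG B \<and> (\<forall>i j. i \<notin> ?S \<or> j \<notin> ?S \<longrightarrow> B i j = 0)"
    have XB: "X * toJ n h B = 1\<^sub>m n"
    proof (rule eq_matI)
      fix i j assume "i < dim_row (1\<^sub>m n :: real mat)" "j < dim_col (1\<^sub>m n :: real mat)"
      then have i: "i < n" and j: "j < n" by auto
      have "(X * toJ n h B) $$ (i,j) = mmult ?S LG B (h i) (h j)"
        unfolding X toJ_mmult[symmetric] using i j by simp
      also have "\<dots> = (if h i = h j then 1 else 0)"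
        using B hS[OF sg rV hb i] hS[OF sg rV hb j] unfolding is_inverse_on_def by blast
      also have "\<dots> = 1\<^sub>m n $$ (i,j)" using i j h_inj[OF sg rV hb i j] by simp
      finally show "(X * toJ n h B) $$ (i,j) = 1\<^sub>m n $$ (i,j)" .
    qed (auto simp: X)
    have "toJ n h B = (Y * X) * toJ n h B" unfolding YX by simp
    also have "\<dots> = Y * (X * toJ n h B)" using Yc X by (intro assoc_mult_mat) auto
    also have "\<dots> = Y" unfolding XB using Yc by simp
    finally have tB: "toJ n h B = Y" .
    show "B = Yf"
    proof (intro ext)
      fix u v show "B u v = Yf u v"
      proof (cases "u \<in> ?S \<and> v \<in> ?S")
        case True
        then show ?thesis using fromJ[of u v B] tB unfolding Yf_def by simp
      next
        case False
        then show ?thesis using B unfolding Yf_def by auto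
      qed
    qed
  qed
qed

end


context
  fixes V :: "'a set" and E :: "'a set set" and r :: 'a and n :: nat and h :: "nat \<Rightarrow> 'a"
  assumes sg: "simple_graph V E" and rV: "r \<in> V" and hb: "bij_betw h {0..<n} (V - {r})"
begin

lemma main_result:
  fixes w \<omega> :: "'a set \<Rightarrow> real"
  assumes conn: "connected_graph V E" and wpos: "\<And>e. e \<in> E \<Longrightarrow> w e > 0"
  defines "S \<equiv> V - {r}"
    and "LG \<equiv> reduced r (laplacian V E w)"
    and "L1 \<equiv> reduced r (laplacian V E (\<lambda>e. w e * \<omega> e))"
    and "L2 \<equiv> reduced r (laplacian V E (\<lambda>e. w e * (\<omega> e)\<^sup>2))"
  shows "tree_expect V E w (R_val \<omega>) = mtrace S (mmult S L1 (minv S LG)) \<and>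
         tree_var V E w (R_val \<omega>) =
           mtrace S (mmult S (\<lambda>i j. L2 i j - mmult S (mmult S L1 (minv S LG)) L1 i j) (minv S LG))"
proof -
  let ?ST = "spanning_trees V E"
  define Z where "Z = (\<Sum>T\<in>?ST. tree_weight w T)"
  define X where "X = toJ n h LG"
  have Xc: "X \<in> carrier_mat n n" unfolding X_def by simp
  have finST: "finite ?ST" by (rule finite_ST[OF sg rV])
  have finT: "finite T" if "T \<in> ?ST" for T
  proof -
    have "T \<subseteq> E" using that unfolding spanning_trees_def by blast
    then show ?thesis using finE[OF sg rV] finite_subset by blast
  qed
  have detX: "det X = Z"
    unfolding X_def toJ_def LG_def Z_def tree_weight_def by (rule matrix_tree[OF sg rV hb])
  have Zpos: "Z > 0"
    unfolding Z_def
  proof (rule sum_pos[OF finST ST_nonempty[OF sg rV conn]])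
    fix T assume T: "T \<in> ?ST"
    then have "T \<subseteq> E" unfolding spanning_trees_def by blast
    then show "tree_weight w T > 0" unfolding tree_weight_def using wpos by (intro prod_pos) blast
  qed
  define Y where "Y = (1 / det X) \<cdot>\<^sub>m Determinant.adj_mat X"
  have Yc: "Y \<in> carrier_mat n n" unfolding Y_def using adj_mat(1)[OF Xc] by simp
  have XY: "X * Y = 1\<^sub>m n"
  proof -
    have "X * Y = (1 / det X) \<cdot>\<^sub>m (X * Determinant.adj_mat X)"
      unfolding Y_def by (rule mult_smult_distrib[OF Xc adj_mat(1)[OF Xc]])
    also have "\<dots> = 1\<^sub>m n" unfolding adj_mat(2)[OF Xc] using Zpos detX by (intro eq_matI) auto
    finally show ?thesis .
  qed
  have YX: "Y * X = 1\<^sub>m n"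
  proof -
    have "Y * X = (1 / det X) \<cdot>\<^sub>m (Determinant.adj_mat X * X)"
      unfolding Y_def by (rule mult_smult_assoc_mat[OF adj_mat(1)[OF Xc] Xc])
    also have "\<dots> = 1\<^sub>m n" unfolding adj_mat(3)[OF Xc] using Zpos detX by (intro eq_matI) auto
    finally show ?thesis .
  qed
  define Yf where "Yf = (\<lambda>u v. if u \<in> V - {r} \<and> v \<in> V - {r} then Y $$ (h' n h u, h' n h v) else 0)"
  have minvY: "minv S LG = Yf" and tY: "toJ n h Yf = Y"
    using minv_toJ[OF sg rV hb X_def XY YX Yc] unfolding Yf_def S_def by auto
  define B1 where "B1 = toJ n h L1"
  define C2 where "C2 = toJ n h (\<lambda>i j. L2 i j / 2)"
  define P where "P = Y * B1"
  define Q where "Q = Y * C2"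
  have Pc: "P \<in> carrier_mat n n" unfolding P_def B1_def using Yc by simp
  have Qc: "Q \<in> carrier_mat n n" unfolding Q_def C2_def using Yc by simp
  have XP: "X * P = B1" unfolding P_def
    using assoc_mult_mat[OF Xc Yc, of B1 n, symmetric] XY unfolding B1_def by simp
  have XQ: "X * Q = C2" unfolding Q_def
    using assoc_mult_mat[OF Xc Yc, of C2 n, symmetric] XY unfolding C2_def by simp
  define Mp where "Mp = mat n n (\<lambda>(i,j). [:X $$ (i,j), (X * P) $$ (i,j), (X * Q) $$ (i,j):])"
  define RP where "RP = (\<Sum>T\<in>?ST. \<Prod>e\<in>T. [:w e, w e * \<omega> e, w e * ((\<omega> e)\<^sup>2 / 2):])"
  have polyeq: "det Mp = RP"
  proof -
    have "poly (det Mp) s = poly RP s" for s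
    proof -
      define cs where "cs e = w e + s * (w e * \<omega> e) + (s\<^sup>2 / 2) * (w e * (\<omega> e)\<^sup>2)" for e
      have "map_mat (\<lambda>p. poly p s) Mp = mat n n (\<lambda>(i,j). reduced r (laplacian V E cs) (h i) (h j))"
      proof (rule eq_matI)
        fix i j assume "i < dim_row (mat n n (\<lambda>(i,j). reduced r (laplacian V E cs) (h i) (h j)))"
          "j < dim_col (mat n n (\<lambda>(i,j). reduced r (laplacian V E cs) (h i) (h j)))"
        then have i: "i < n" and j: "j < n" by auto
        have "reduced r (laplacian V E cs) (h i) (h j) = LG (h i) (h j) + s * L1 (h i) (h j) + (s\<^sup>2 / 2) * L2 (h i) (h j)"
          unfolding cs_def LG_def L1_def L2_def reduced_def laplacian_lin by simp
        then show "map_mat (\<lambda>p. poly p s) Mp $$ (i,j) = mat n n (\<lambda>(i,j). reduced r (laplacian V E cs) (h i) (h j)) $$ (i,j)"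
          using i j unfolding Mp_def XP XQ unfolding X_def B1_def C2_def by (simp add: power2_eq_square algebra_simps)
      qed (auto simp: Mp_def)
      then have "poly (det Mp) s = (\<Sum>T\<in>?ST. \<Prod>e\<in>T. cs e)"
        using poly_det[of s Mp] matrix_tree[OF sg rV hb, of cs] by simp
      also have "\<dots> = poly RP s"
        unfolding RP_def poly_sum poly_prod cs_def by (simp add: power2_eq_square algebra_simps)
      finally show ?thesis .
    qed
    then show ?thesis using poly_eq_poly_eq_iff by blast
  qed
  define trP where "trP = (\<Sum>i=0..<n. P $$ (i,i))"
  define trQ where "trQ = (\<Sum>i=0..<n. Q $$ (i,i))"
  define trPP where "trPP = (\<Sum>i=0..<n. \<Sum>k=0..<n. P $$ (i,k) * P $$ (k,i))"
  have c1: "coeff (det Mp) 1 = Z * trP" unfolding Mp_def trP_def detX[symmetric] by (rule det_coeffs(1)[OF Xc Pc Qc])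
  have c2: "coeff (det Mp) 2 = Z * (trQ + (trP\<^sup>2 - trPP) / 2)"
    unfolding Mp_def trP_def trQ_def trPP_def detX[symmetric] by (rule det_coeffs(2)[OF Xc Pc Qc])
  have RP1: "coeff RP 1 = (\<Sum>T\<in>?ST. tree_weight w T * R_val \<omega> T)"
    unfolding RP_def coeff_sum
  proof (rule sum.cong[OF refl])
    fix T assume "T \<in> ?ST"
    then show "coeff (\<Prod>e\<in>T. [:w e, w e * \<omega> e, w e * ((\<omega> e)\<^sup>2 / 2):]) 1 = tree_weight w T * R_val \<omega> T"
      using prod3_coeffs[OF finT, of T w \<omega> "\<lambda>e. (\<omega> e)\<^sup>2 / 2"] unfolding tree_weight_def R_val_def by blast
  qed
  have RP2: "coeff RP 2 = (\<Sum>T\<in>?ST. tree_weight w T * (R_val \<omega> T)\<^sup>2) / 2"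
    unfolding RP_def coeff_sum sum_divide_distrib
  proof (rule sum.cong[OF refl])
    fix T assume T: "T \<in> ?ST"
    have "coeff (\<Prod>e\<in>T. [:w e, w e * \<omega> e, w e * ((\<omega> e)\<^sup>2 / 2):]) 2 =
      (\<Prod>e\<in>T. w e) * ((\<Sum>e\<in>T. (\<omega> e)\<^sup>2 / 2) + ((\<Sum>e\<in>T. \<omega> e)\<^sup>2 - (\<Sum>e\<in>T. (\<omega> e)\<^sup>2)) / 2)"
      using prod3_coeffs[OF finT[OF T], of w \<omega> "\<lambda>e. (\<omega> e)\<^sup>2 / 2"] by blast
    also have "\<dots> = (\<Prod>e\<in>T. w e) * (\<Sum>e\<in>T. \<omega> e)\<^sup>2 / 2"
      by (simp add: sum_divide_distrib[symmetric] field_simps)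
    finally show "coeff (\<Prod>e\<in>T. [:w e, w e * \<omega> e, w e * ((\<omega> e)\<^sup>2 / 2):]) 2 = tree_weight w T * (R_val \<omega> T)\<^sup>2 / 2"
      unfolding tree_weight_def R_val_def .
  qed
  define S1 where "S1 = (\<Sum>T\<in>?ST. tree_weight w T * R_val \<omega> T)"
  define S2 where "S2 = (\<Sum>T\<in>?ST. tree_weight w T * (R_val \<omega> T)\<^sup>2)"
  have S1eq: "S1 = Z * trP" using c1 RP1 polyeq unfolding S1_def by simp
  have S2eq: "S2 = Z * (2 * trQ + trP\<^sup>2 - trPP)" using c2 RP2 polyeq unfolding S2_def by (simp add: field_simps)
  have finS: "finite S" unfolding S_def by (rule finS[OF sg rV hb])
  define Pf where "Pf = mmult S Yf L1"
  have tP: "toJ n h Pf = P" unfolding Pf_def P_def S_def toJ_mmult[OF sg rV hb] tY B1_def ..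
  have trP_eq: "trP = mtrace S (mmult S L1 (minv S LG))"
  proof -
    have "trP = mtrace S Pf" unfolding trP_def S_def mtrace_toJ[OF sg rV hb] tP[unfolded S_def] ..
    then show ?thesis unfolding Pf_def minvY by (simp add: mtrace_comm)
  qed
  have trQ_eq: "2 * trQ = mtrace S (mmult S L2 (minv S LG))"
  proof -
    have "toJ n h (mmult S Yf (\<lambda>i j. L2 i j / 2)) = Q"
      unfolding Q_def S_def toJ_mmult[OF sg rV hb] tY C2_def ..
    then have "trQ = mtrace S (mmult S Yf (\<lambda>i j. L2 i j / 2))"
      unfolding trQ_def S_def mtrace_toJ[OF sg rV hb] by simp
    then show ?thesis unfolding mtrace_half minvY by (simp add: mtrace_comm)
  qed
  have trPP_eq: "trPP = mtrace S (mmult S (mmult S (mmult S L1 (minv S LG)) L1) (minv S LG))"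
  proof -
    have "trPP = mtrace S (mmult S Pf Pf)"
      unfolding trPP_def tP[symmetric] S_def by (rule trPP_toJ[OF sg rV hb])
    also have "\<dots> = mtrace S (mmult S Yf (mmult S L1 (mmult S Yf L1)))"
      unfolding Pf_def mmult_assoc ..
    also have "\<dots> = mtrace S (mmult S (mmult S L1 (mmult S Yf L1)) Yf)" by (rule mtrace_comm)
    also have "\<dots> = mtrace S (mmult S (mmult S (mmult S L1 Yf) L1) Yf)"
      unfolding mmult_assoc ..
    finally show ?thesis unfolding minvY .
  qed
  define Ev where "Ev = tree_expect V E w (R_val \<omega>)"
  have Ev_eq: "Ev = trP"
    unfolding Ev_def tree_expect_def using S1eq Zpos unfolding S1_def Z_def by simp
  have var: "tree_var V E w (R_val \<omega>) = 2 * trQ - trPP"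
  proof -
    have "(\<Sum>T\<in>?ST. tree_weight w T * (R_val \<omega> T - Ev)\<^sup>2) = S2 - 2 * Ev * S1 + Ev\<^sup>2 * Z"
      unfolding S1_def S2_def Z_def
      by (simp add: power2_eq_square algebra_simps sum.distrib sum_subtractf sum_distrib_left sum_distrib_right)
    also have "\<dots> = Z * (2 * trQ - trPP)" unfolding S2eq S1eq Ev_eq by (simp add: power2_eq_square algebra_simps)
    finally have "(\<Sum>T\<in>?ST. tree_weight w T * (R_val \<omega> T - Ev)\<^sup>2) = Z * (2 * trQ - trPP)" .
    then show ?thesis unfolding tree_var_def Ev_def[symmetric] unfolding tree_expect_def
      using Zpos unfolding Z_def by simp
  qed
  show ?thesis
    unfolding Ev_def[symmetric] Ev_eq var mtrace_diff trP_eq trQ_eq trPP_eq by simp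
qed

end


theorem corollary2:
  fixes V :: "'a set" and E :: "'a set set"
    and w \<omega> :: "'a set \<Rightarrow> real" and r :: 'a
  assumes "simple_graph V E"
    and "connected_graph V E"
    and "\<And>e. e \<in> E \<Longrightarrow> w e > 0"
    and "r \<in> V"
  defines "S \<equiv> V - {r}"
    and "LG \<equiv> reduced r (laplacian V E w)"
    and "L1 \<equiv> reduced r (laplacian V E (\<lambda>e. w e * \<omega> e))"
    and "L2 \<equiv> reduced r (laplacian V E (\<lambda>e. w e * (\<omega> e)\<^sup>2))"
  shows "tree_expect V E w (R_val \<omega>) = mtrace S (mmult S L1 (minv S LG)) \<and>
         tree_var V E w (R_val \<omega>) =
           mtrace S (mmult S (\<lambda>i j. L2 i j - mmult S (mmult S L1 (minv S LG)) L1 i j) (minv S LG))"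
proof -
  have "finite (V - {r})" using finV[OF assms(1,4)] by simp
  then obtain h where hb: "bij_betw h {0..<card (V - {r})} (V - {r})"
    using ex_bij_betw_nat_finite by blast
  show ?thesis
    unfolding S_def LG_def L1_def L2_def
    by (rule main_result[OF assms(1,4) hb assms(2,3)])
qed

end
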